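(* Let $c>0$ and let $\Phi:[0,\infty)\to\mathbb{R}$ be the Gneiting function $$\Phi(r)=\left(1-\frac{r}{c}\right)_+^{5}\left(1+5\frac{r}{c}-27\left(\frac{r}{c}\right)^2\right).$$ Let $\mathbf{p}\in\mathbb{R}^2$, $\Delta_x,\Delta_y\in\mathbb{R}$, and define $\mathbf{H}=(H_1,H_2):\mathbb{R}^2\to\mathbb{R}^2$ by $$H_1(x,y)=x+\Delta_x\,\Phi(\|(x,y)-\mathbf{p}\|),\qquad H_2(x,y)=y+\Delta_y\,\Phi(\|(x,y)-\mathbf{p}\|),$$ where $\|\cdot\|$ is the Euclidean norm. Let $\Delta=\max(|\Delta_x|,|\Delta_y|)$. If $c>4.43\sqrt{2}\,\Delta$ (approximately $c>6.26\,\Delta$), then the Jacobian determinant $$\det J(x,y)=1+\Delta_x\frac{\partial}{\partial x}\Phi(\|(x,y)-\mathbf{p}\|)+\Delta_y\frac{\partial}{\partial y}\Phi(\|(x,y)-\mathbf{p}\|)$$ is strictly positive at every point $(x,y)\in\mathbb{R}^2$.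
   Context: $(t)_+=\max(t,0)$ denotes the truncated power function. The map $\mathbf{H}$ is the one-landmark transformation shifting the source landmark $\mathbf{p}$ to the target landmark $\mathbf{p}+(\Delta_x,\Delta_y)$; positivity of the Jacobian determinant everywhere is the criterion used for topology preservation. *)

theory Defs
  imports "HOL-Analysis.Analysis"
begin

definition tpos :: "real \<Rightarrow> real" where
  "tpos t = max t 0"

definition gneiting :: "real \<Rightarrow> real \<Rightarrow> real" where
  "gneiting c r = (tpos (1 - r / c)) ^ 5 * (1 + 5 * (r / c) - 27 * (r / c)^2)"

end

theory Submission imports Defs begin

lemma tpos5_deriv: "((\<lambda>t. tpos t ^ 5) has_real_derivative 5 * tpos t ^ 4) (at t)"
proof (cases "t > 0")
  case True
  have ev: "eventually (\<lambda>s. s > 0) (at t)"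
    using True by (simp add: eventually_at_topological) (meson greaterThan_iff open_greaterThan)
  have "((\<lambda>t. t ^ 5) has_real_derivative 5 * t ^ 4) (at t)"
    by (auto intro!: derivative_eq_intros)
  moreover have "eventually (\<lambda>s. tpos s ^ 5 = s ^ 5) (at t)"
    using ev by eventually_elim (simp add: tpos_def)
  ultimately show ?thesis using True
    by (subst has_field_derivative_cong_eventually[where g="\<lambda>t. t^5"]) (auto simp: tpos_def)
next
  case False
  show ?thesis
  proof (cases "t < 0")
    case True
    have ev: "eventually (\<lambda>s. s < 0) (at t)"
      using True by (simp add: eventually_at_topological) (meson lessThan_iff open_lessThan)
    have "eventually (\<lambda>s. tpos s ^ 5 = 0) (at t)"
      using ev by eventually_elim (simp add: tpos_def)
    then show ?thesis using True
      by (subst has_field_derivative_cong_eventually[where g="\<lambda>t. 0"]) (auto simp: tpos_def)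
  next
    case False
    with \<open>\<not> t > 0\<close> have t0: "t = 0" by simp
    have "((\<lambda>y. (tpos y ^ 5 - tpos 0 ^ 5) / (y - 0)) \<longlongrightarrow> 0) (at 0)"
    proof (rule Lim_null_comparison)
      show "eventually (\<lambda>y. norm ((tpos y ^ 5 - tpos 0 ^ 5) / (y - 0)) \<le> y ^ 4) (at 0)"
      proof (rule always_eventually, rule allI)
        fix y :: real
        show "norm ((tpos y ^ 5 - tpos 0 ^ 5) / (y - 0)) \<le> y ^ 4"
        proof (cases "y > 0")
          case True then show ?thesis by (simp add: tpos_def power_eq_if)
        next
          case False then show ?thesis by (simp add: tpos_def)
        qed
      qed
      show "((\<lambda>y::real. y ^ 4) \<longlongrightarrow> 0) (at 0)"
        by (auto intro!: tendsto_eq_intros)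
    qed
    then show ?thesis using t0 by (simp add: has_field_derivative_iff tpos_def)
  qed
qed

definition Gf :: "real \<Rightarrow> real" where
  "Gf t = tpos (1 - t) ^ 5 * (1 + 5 * t - 27 * t^2)"

lemma gneiting_Gf: "gneiting c r = Gf (r / c)"
  by (simp add: gneiting_def Gf_def)

lemma Gf_deriv: "(Gf has_real_derivative 21 * t * (9 * t - 4) * tpos (1 - t) ^ 4) (at t)"
proof -
  have d1: "((\<lambda>t. tpos (1 - t) ^ 5) has_real_derivative 5 * tpos (1 - t) ^ 4 * (-1)) (at t)"
    by (rule DERIV_chain2[OF tpos5_deriv]) (auto intro!: derivative_eq_intros)
  have "(Gf has_real_derivative
      5 * tpos (1 - t) ^ 4 * (-1) * (1 + 5 * t - 27 * t^2) + tpos (1 - t) ^ 5 * (5 - 54 * t)) (at t)"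
    unfolding Gf_def
    by (rule derivative_eq_intros d1 | simp)+
  moreover have "tpos (1 - t) ^ 5 = tpos (1 - t) ^ 4 * (1 - t)"
    by (cases "t \<le> 1") (simp_all add: tpos_def power_eq_if)
  ultimately show ?thesis
    by (simp add: algebra_simps power2_eq_square)
qed

lemma abs_deriv0:
  fixes f :: "real \<Rightarrow> real"
  assumes "(f has_real_derivative 0) (at 0)"
  shows "((\<lambda>h. f \<bar>h\<bar>) has_real_derivative 0) (at 0)"
proof -
  have D: "((\<lambda>y. (f y - f 0) / y) \<longlongrightarrow> 0) (at 0)"
    using assms by (simp add: has_field_derivative_iff)
  have A: "filterlim (\<lambda>h::real. \<bar>h\<bar>) (at 0) (at 0)"
    unfolding filterlim_at
    by (auto simp: eventually_at intro!: tendsto_eq_intros exI[of _ 1])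
  have "((\<lambda>h. (f \<bar>h\<bar> - f 0) / \<bar>h\<bar>) \<longlongrightarrow> 0) (at 0)"
    using filterlim_compose[OF D A] by simp
  then have "((\<lambda>h. \<bar>(f \<bar>h\<bar> - f 0) / \<bar>h\<bar>\<bar>) \<longlongrightarrow> 0) (at 0)"
    by (simp only: tendsto_rabs_zero_iff)
  then have "((\<lambda>h. \<bar>(f \<bar>h\<bar> - f 0) / h\<bar>) \<longlongrightarrow> 0) (at 0)"
    by simp
  then have "((\<lambda>h. (f \<bar>h\<bar> - f 0) / h) \<longlongrightarrow> 0) (at 0)"
    by (simp only: tendsto_rabs_zero_iff)
  then show ?thesis by (simp add: has_field_derivative_iff)
qed

lemma dir_deriv:
  fixes a v x c :: real
  assumes c: "c > 0"
  defines "t \<equiv> sqrt ((x - a)^2 + v^2) / c"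
  shows "((\<lambda>s. Gf (sqrt ((s - a)^2 + v^2) / c)) has_real_derivative
            (x - a) * (21 * (9 * t - 4) * tpos (1 - t) ^ 4 / c^2)) (at x)"
proof (cases "(x - a)^2 + v^2 > 0")
  case True
  define R where "R = sqrt ((x - a)^2 + v^2)"
  have R: "R > 0" using True by (simp add: R_def)
  have q: "((\<lambda>s. (s - a)^2 + v^2) has_real_derivative 2 * (x - a)) (at x)"
    by (auto intro!: derivative_eq_intros)
  have inner: "((\<lambda>s. sqrt ((s - a)^2 + v^2) / c) has_real_derivative
      (inverse (sqrt ((x - a)^2 + v^2)) / 2 * (2 * (x - a) * 1 + 0)) / c) (at x)"
    using DERIV_cdivide[OF DERIV_chain2[OF DERIV_real_sqrt[OF True] q], of c] by simp
  have "((\<lambda>s. Gf (sqrt ((s - a)^2 + v^2) / c)) has_real_derivative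
      (21 * t * (9 * t - 4) * tpos (1 - t) ^ 4) * ((inverse (sqrt ((x - a)^2 + v^2)) / 2 * (2 * (x - a) * 1 + 0)) / c)) (at x)"
    unfolding t_def by (rule DERIV_chain2[OF Gf_deriv inner])
  moreover have "(21 * t * (9 * t - 4) * tpos (1 - t) ^ 4) * ((inverse (sqrt ((x - a)^2 + v^2)) / 2 * (2 * (x - a) * 1 + 0)) / c)
      = (x - a) * (21 * (9 * t - 4) * tpos (1 - t) ^ 4 / c^2)"
    unfolding t_def R_def[symmetric] using R c by (simp add: field_simps power2_eq_square)
  ultimately show ?thesis by simp
next
  case False
  then have xa: "x = a" and v: "v = 0"
    by (smt (verit) power2_less_eq_zero_iff sum_power2_gt_zero_iff)+
  have lin: "((\<lambda>z. z / c) has_real_derivative 1 / c) (at 0)"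
    using c by (auto intro!: derivative_eq_intros)
  have "((\<lambda>z. Gf (z / c)) has_real_derivative
      (21 * (0 / c) * (9 * (0 / c) - 4) * tpos (1 - 0 / c) ^ 4) * (1 / c)) (at 0)"
    by (rule DERIV_chain2[OF _ lin]) (rule Gf_deriv)
  then have g0: "((\<lambda>z. Gf (z / c)) has_real_derivative 0) (at 0)" by simp
  have sh: "((\<lambda>s. s - a) has_real_derivative 1) (at x)"
    by (auto intro!: derivative_eq_intros)
  have "((\<lambda>s. Gf (\<bar>s - a\<bar> / c)) has_real_derivative 0 * 1) (at x)"
    using xa by (intro DERIV_chain2[OF _ sh, of "\<lambda>h. Gf (\<bar>h\<bar> / c)", simplified]) (simp add: abs_deriv0[OF g0])
  then show ?thesis using xa v by simp
qed

definition B1 :: "real \<Rightarrow> real" where "B1 t = 443/100 - 21*t*(4-9*t)*(1-t)^4"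
definition B2 :: "real \<Rightarrow> real" where "B2 t = 443/100 + 21*t*(4-9*t)*(1-t)^4"

lemma bp0_0: fixes t::real assumes "(0) \<le> t" "t \<le> (1/8)" shows "0 \<le> B1 t"
proof -
  have e: "443/100 - 21*t*(4-9*t)*(1-t)^4 = (29032448/25)*(t-(0))^0*((1/8)-t)^6 + (105381888/25)*(t-(0))^1*((1/8)-t)^5 + (29036544/5)*(t-(0))^2*((1/8)-t)^4 + (18286592/5)*(t-(0))^3*((1/8)-t)^3 + (4777344/5)*(t-(0))^4*((1/8)-t)^2 + (1322688/25)*(t-(0))^5*((1/8)-t)^1 + (40373/25)*(t-(0))^6*((1/8)-t)^0" by algebra
  have "0 \<le> (29032448/25)*(t-(0))^0*((1/8)-t)^6 + (105381888/25)*(t-(0))^1*((1/8)-t)^5 + (29036544/5)*(t-(0))^2*((1/8)-t)^4 + (18286592/5)*(t-(0))^3*((1/8)-t)^3 + (4777344/5)*(t-(0))^4*((1/8)-t)^2 + (1322688/25)*(t-(0))^5*((1/8)-t)^1 + (40373/25)*(t-(0))^6*((1/8)-t)^0" using assms by (intro add_nonneg_nonneg mult_nonneg_nonneg zero_le_power) auto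
  then show ?thesis using e by (simp add: B1_def B2_def)
qed

lemma bp0_1: fixes t::real assumes "(1/8) \<le> t" "t \<le> (9/64)" shows "0 \<le> B1 t"
proof -
  have e: "443/100 - 21*t*(4-9*t)*(1-t)^4 = (10583539712/25)*(t-(1/8))^0*((9/64)-t)^6 + (28097052672/25)*(t-(1/8))^1*((9/64)-t)^5 + (10992807936/5)*(t-(1/8))^2*((9/64)-t)^4 + (29260802048/5)*(t-(1/8))^3*((9/64)-t)^3 + (46289305536/5)*(t-(1/8))^4*((9/64)-t)^2 + (166852041072/25)*(t-(1/8))^5*((9/64)-t)^1 + (44259001637/25)*(t-(1/8))^6*((9/64)-t)^0" by algebra
  have "0 \<le> (10583539712/25)*(t-(1/8))^0*((9/64)-t)^6 + (28097052672/25)*(t-(1/8))^1*((9/64)-t)^5 + (10992807936/5)*(t-(1/8))^2*((9/64)-t)^4 + (29260802048/5)*(t-(1/8))^3*((9/64)-t)^3 + (46289305536/5)*(t-(1/8))^4*((9/64)-t)^2 + (166852041072/25)*(t-(1/8))^5*((9/64)-t)^1 + (44259001637/25)*(t-(1/8))^6*((9/64)-t)^0" using assms by (intro add_nonneg_nonneg mult_nonneg_nonneg zero_le_power) auto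
  then show ?thesis using e by (simp add: B1_def B2_def)
qed

lemma bp0_2: fixes t::real assumes "(9/64) \<le> t" "t \<le> (5/32)" shows "0 \<le> B1 t"
proof -
  have e: "443/100 - 21*t*(4-9*t)*(1-t)^4 = (44259001637/25)*(t-(9/64))^0*((5/32)-t)^6 + (364255978572/25)*(t-(9/64))^1*((5/32)-t)^5 + (243693243036/5)*(t-(9/64))^2*((5/32)-t)^4 + (422525366048/5)*(t-(9/64))^3*((5/32)-t)^3 + (401170749936/5)*(t-(9/64))^4*((5/32)-t)^2 + (991964897472/25)*(t-(9/64))^5*((5/32)-t)^1 + (200268744512/25)*(t-(9/64))^6*((5/32)-t)^0" by algebra
  have "0 \<le> (44259001637/25)*(t-(9/64))^0*((5/32)-t)^6 + (364255978572/25)*(t-(9/64))^1*((5/32)-t)^5 + (243693243036/5)*(t-(9/64))^2*((5/32)-t)^4 + (422525366048/5)*(t-(9/64))^3*((5/32)-t)^3 + (401170749936/5)*(t-(9/64))^4*((5/32)-t)^2 + (991964897472/25)*(t-(9/64))^5*((5/32)-t)^1 + (200268744512/25)*(t-(9/64))^6*((5/32)-t)^0" using assms by (intro add_nonneg_nonneg mult_nonneg_nonneg zero_le_power) auto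
  then show ?thesis using e by (simp add: B1_def B2_def)
qed

lemma bp0_3: fixes t::real assumes "(5/32) \<le> t" "t \<le> (3/16)" shows "0 \<le> B1 t"
proof -
  have e: "443/100 - 21*t*(4-9*t)*(1-t)^4 = (3129199133/25)*(t-(5/32))^0*((3/16)-t)^6 + (25326681348/25)*(t-(5/32))^1*((3/16)-t)^5 + (16564839324/5)*(t-(5/32))^2*((3/16)-t)^4 + (28035643232/5)*(t-(5/32))^3*((3/16)-t)^3 + (25988179824/5)*(t-(5/32))^4*((3/16)-t)^2 + (62785194048/25)*(t-(5/32))^5*((3/16)-t)^1 + (12395801408/25)*(t-(5/32))^6*((3/16)-t)^0" by algebra
  have "0 \<le> (3129199133/25)*(t-(5/32))^0*((3/16)-t)^6 + (25326681348/25)*(t-(5/32))^1*((3/16)-t)^5 + (16564839324/5)*(t-(5/32))^2*((3/16)-t)^4 + (28035643232/5)*(t-(5/32))^3*((3/16)-t)^3 + (25988179824/5)*(t-(5/32))^4*((3/16)-t)^2 + (62785194048/25)*(t-(5/32))^5*((3/16)-t)^1 + (12395801408/25)*(t-(5/32))^6*((3/16)-t)^0" using assms by (intro add_nonneg_nonneg mult_nonneg_nonneg zero_le_power) auto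
  then show ?thesis using e by (simp add: B1_def B2_def)
qed

lemma bp0_4: fixes t::real assumes "(3/16) \<le> t" "t \<le> (1/4)" shows "0 \<le> B1 t"
proof -
  have e: "443/100 - 21*t*(4-9*t)*(1-t)^4 = (193684397/25)*(t-(3/16))^0*((1/4)-t)^6 + (1524281832/25)*(t-(3/16))^1*((1/4)-t)^5 + (967628016/5)*(t-(3/16))^2*((1/4)-t)^4 + (1587922688/5)*(t-(3/16))^3*((1/4)-t)^3 + (1426511616/5)*(t-(3/16))^4*((1/4)-t)^2 + (3339282432/25)*(t-(3/16))^5*((1/4)-t)^1 + (638799872/25)*(t-(3/16))^6*((1/4)-t)^0" by algebra
  have "0 \<le> (193684397/25)*(t-(3/16))^0*((1/4)-t)^6 + (1524281832/25)*(t-(3/16))^1*((1/4)-t)^5 + (967628016/5)*(t-(3/16))^2*((1/4)-t)^4 + (1587922688/5)*(t-(3/16))^3*((1/4)-t)^3 + (1426511616/5)*(t-(3/16))^4*((1/4)-t)^2 + (3339282432/25)*(t-(3/16))^5*((1/4)-t)^1 + (638799872/25)*(t-(3/16))^6*((1/4)-t)^0" using assms by (intro add_nonneg_nonneg mult_nonneg_nonneg zero_le_power) auto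
  then show ?thesis using e by (simp add: B1_def B2_def)
qed

lemma bp0_5: fixes t::real assumes "(1/4) \<le> t" "t \<le> (1/2)" shows "0 \<le> B1 t"
proof -
  have e: "443/100 - 21*t*(4-9*t)*(1-t)^4 = (155957/25)*(t-(1/4))^0*((1/2)-t)^6 + (1417692/25)*(t-(1/4))^1*((1/2)-t)^5 + (963996/5)*(t-(1/4))^2*((1/2)-t)^4 + (1562528/5)*(t-(1/4))^3*((1/2)-t)^3 + (1318896/5)*(t-(1/4))^4*((1/2)-t)^2 + (2822592/25)*(t-(1/4))^5*((1/2)-t)^1 + (487232/25)*(t-(1/4))^6*((1/2)-t)^0" by algebra
  have "0 \<le> (155957/25)*(t-(1/4))^0*((1/2)-t)^6 + (1417692/25)*(t-(1/4))^1*((1/2)-t)^5 + (963996/5)*(t-(1/4))^2*((1/2)-t)^4 + (1562528/5)*(t-(1/4))^3*((1/2)-t)^3 + (1318896/5)*(t-(1/4))^4*((1/2)-t)^2 + (2822592/25)*(t-(1/4))^5*((1/2)-t)^1 + (487232/25)*(t-(1/4))^6*((1/2)-t)^0" using assms by (intro add_nonneg_nonneg mult_nonneg_nonneg zero_le_power) auto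
  then show ?thesis using e by (simp add: B1_def B2_def)
qed

lemma bp0_6: fixes t::real assumes "(1/2) \<le> t" "t \<le> (1)" shows "0 \<le> B1 t"
proof -
  have e: "443/100 - 21*t*(4-9*t)*(1-t)^4 = (7613/25)*(t-(1/2))^0*((1)-t)^6 + (48828/25)*(t-(1/2))^1*((1)-t)^5 + (23364/5)*(t-(1/2))^2*((1)-t)^4 + (28352/5)*(t-(1/2))^3*((1)-t)^3 + (21264/5)*(t-(1/2))^4*((1)-t)^2 + (42528/25)*(t-(1/2))^5*((1)-t)^1 + (7088/25)*(t-(1/2))^6*((1)-t)^0" by algebra
  have "0 \<le> (7613/25)*(t-(1/2))^0*((1)-t)^6 + (48828/25)*(t-(1/2))^1*((1)-t)^5 + (23364/5)*(t-(1/2))^2*((1)-t)^4 + (28352/5)*(t-(1/2))^3*((1)-t)^3 + (21264/5)*(t-(1/2))^4*((1)-t)^2 + (42528/25)*(t-(1/2))^5*((1)-t)^1 + (7088/25)*(t-(1/2))^6*((1)-t)^0" using assms by (intro add_nonneg_nonneg mult_nonneg_nonneg zero_le_power) auto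
  then show ?thesis using e by (simp add: B1_def B2_def)
qed

lemma bp1_0: fixes t::real assumes "(0) \<le> t" "t \<le> (1/2)" shows "0 \<le> B2 t"
proof -
  have e: "443/100 + 21*t*(4-9*t)*(1-t)^4 = (7088/25)*(t-(0))^0*((1/2)-t)^6 + (109728/25)*(t-(0))^1*((1/2)-t)^5 + (46464/5)*(t-(0))^2*((1/2)-t)^4 + (45152/5)*(t-(0))^3*((1/2)-t)^3 + (25464/5)*(t-(0))^4*((1/2)-t)^2 + (42528/25)*(t-(0))^5*((1/2)-t)^1 + (6563/25)*(t-(0))^6*((1/2)-t)^0" by algebra
  have "0 \<le> (7088/25)*(t-(0))^0*((1/2)-t)^6 + (109728/25)*(t-(0))^1*((1/2)-t)^5 + (46464/5)*(t-(0))^2*((1/2)-t)^4 + (45152/5)*(t-(0))^3*((1/2)-t)^3 + (25464/5)*(t-(0))^4*((1/2)-t)^2 + (42528/25)*(t-(0))^5*((1/2)-t)^1 + (6563/25)*(t-(0))^6*((1/2)-t)^0" using assms by (intro add_nonneg_nonneg mult_nonneg_nonneg zero_le_power) auto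
  then show ?thesis using e by (simp add: B1_def B2_def)
qed

lemma bp1_1: fixes t::real assumes "(1/2) \<le> t" "t \<le> (1)" shows "0 \<le> B2 t"
proof -
  have e: "443/100 + 21*t*(4-9*t)*(1-t)^4 = (6563/25)*(t-(1/2))^0*((1)-t)^6 + (36228/25)*(t-(1/2))^1*((1)-t)^5 + (19164/5)*(t-(1/2))^2*((1)-t)^4 + (28352/5)*(t-(1/2))^3*((1)-t)^3 + (21264/5)*(t-(1/2))^4*((1)-t)^2 + (42528/25)*(t-(1/2))^5*((1)-t)^1 + (7088/25)*(t-(1/2))^6*((1)-t)^0" by algebra
  have "0 \<le> (6563/25)*(t-(1/2))^0*((1)-t)^6 + (36228/25)*(t-(1/2))^1*((1)-t)^5 + (19164/5)*(t-(1/2))^2*((1)-t)^4 + (28352/5)*(t-(1/2))^3*((1)-t)^3 + (21264/5)*(t-(1/2))^4*((1)-t)^2 + (42528/25)*(t-(1/2))^5*((1)-t)^1 + (7088/25)*(t-(1/2))^6*((1)-t)^0" using assms by (intro add_nonneg_nonneg mult_nonneg_nonneg zero_le_power) auto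
  then show ?thesis using e by (simp add: B1_def B2_def)
qed

lemma Bbound:
  fixes t :: real
  assumes t0: "0 \<le> t" and t1: "t \<le> 1"
  shows "\<bar>21*t*(9*t-4)*(1-t)^4\<bar> \<le> 443/100"
proof -
  have p1: "0 \<le> B1 t"
    using t0 t1 bp0_0[of t] bp0_1[of t] bp0_2[of t] bp0_3[of t] bp0_4[of t] bp0_5[of t] bp0_6[of t]
    by linarith
  have p2: "0 \<le> B2 t"
    using t0 t1 bp1_0[of t] bp1_1[of t] by linarith
  have e: "21*t*(9*t-4)*(1-t)^4 = - (21*t*(4-9*t)*(1-t)^4)" by (simp add: algebra_simps)
  show ?thesis unfolding e using p1 p2 unfolding B1_def B2_def by linarith
qed

theorem mainTheorem2:
  fixes c dx dy x y :: real and p :: "real \<times> real"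
  assumes "c > 0"
    and "c > 4.43 * sqrt 2 * max \<bar>dx\<bar> \<bar>dy\<bar>"
  shows "\<exists>Dx Dy.
           ((\<lambda>s. gneiting c (norm ((s, y) - p))) has_real_derivative Dx) (at x) \<and>
           ((\<lambda>s. gneiting c (norm ((x, s) - p))) has_real_derivative Dy) (at y) \<and>
           1 + dx * Dx + dy * Dy > 0"
proof -
  note c = assms(1)
  obtain a b where p: "p = (a, b)" by (cases p)
  have n1: "\<And>s. gneiting c (norm ((s, y) - p)) = Gf (sqrt ((s - a)^2 + (y - b)^2) / c)"
    by (simp add: p gneiting_Gf norm_Pair)
  have n2: "\<And>s. gneiting c (norm ((x, s) - p)) = Gf (sqrt ((s - b)^2 + (x - a)^2) / c)"
    by (simp add: p gneiting_Gf norm_Pair add.commute)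
  define u where "u = x - a"
  define v where "v = y - b"
  define R where "R = sqrt (u^2 + v^2)"
  define t where "t = R / c"
  define K where "K = 21 * (9 * t - 4) * tpos (1 - t) ^ 4 / c^2"
  define D where "D = max \<bar>dx\<bar> \<bar>dy\<bar>"
  have dX: "((\<lambda>s. gneiting c (norm ((s, y) - p))) has_real_derivative u * K) (at x)"
    unfolding n1 using dir_deriv[OF c, of a "y - b" x]
    by (simp add: K_def t_def R_def u_def v_def)
  have dY: "((\<lambda>s. gneiting c (norm ((x, s) - p))) has_real_derivative v * K) (at y)"
    unfolding n2 using dir_deriv[OF c, of b "x - a" y]
    by (simp add: K_def t_def R_def u_def v_def add.commute)
  have R0: "R \<ge> 0" by (simp add: R_def)
  have D0: "D \<ge> 0" by (simp add: D_def)
  have uv: "\<bar>u\<bar> + \<bar>v\<bar> \<le> sqrt 2 * R"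
  proof -
    have "\<bar>u\<bar> + \<bar>v\<bar> = sqrt ((\<bar>u\<bar> + \<bar>v\<bar>)^2)" by simp
    also have "\<dots> \<le> sqrt (2 * (u^2 + v^2))"
    proof (rule real_sqrt_le_mono)
      have "2 * (u^2 + v^2) - (\<bar>u\<bar> + \<bar>v\<bar>)^2 = (\<bar>u\<bar> - \<bar>v\<bar>)^2"
        by (simp add: power2_eq_square algebra_simps)
      moreover have "(\<bar>u\<bar> - \<bar>v\<bar>)^2 \<ge> 0" by simp
      ultimately show "(\<bar>u\<bar> + \<bar>v\<bar>)^2 \<le> 2 * (u^2 + v^2)" by linarith
    qed
    also have "\<dots> = sqrt 2 * R" unfolding R_def by (rule real_sqrt_mult)
    finally show ?thesis .
  qed
  have lin: "\<bar>dx * u + dy * v\<bar> \<le> D * (sqrt 2 * R)"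
  proof -
    have "\<bar>dx * u + dy * v\<bar> \<le> \<bar>dx\<bar> * \<bar>u\<bar> + \<bar>dy\<bar> * \<bar>v\<bar>"
      by (simp add: abs_mult[symmetric] abs_triangle_ineq)
    also have "\<dots> \<le> D * \<bar>u\<bar> + D * \<bar>v\<bar>"
      by (intro add_mono mult_right_mono) (auto simp: D_def)
    also have "\<dots> \<le> D * (sqrt 2 * R)"
      using uv D0 by (simp add: distrib_left[symmetric] mult_left_mono)
    finally show ?thesis .
  qed
  have RK: "\<bar>R * K\<bar> \<le> (443/100) / c"
  proof (cases "t \<le> 1")
    case False
    then have "tpos (1 - t) = 0" by (simp add: tpos_def)
    then show ?thesis using c by (simp add: K_def)
  next
    case True
    have t0: "t \<ge> 0" using R0 c by (simp add: t_def)
    have tp: "tpos (1 - t) = 1 - t" using True by (simp add: tpos_def)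
    have "R * K = (21*t*(9*t-4)*(1-t)^4) / c"
    proof -
      have Rt: "R = t * c" using c by (simp add: t_def)
      show ?thesis unfolding K_def tp Rt using c by (simp add: field_simps power2_eq_square)
    qed
    then have "\<bar>R * K\<bar> = \<bar>21*t*(9*t-4)*(1-t)^4\<bar> / c" using c by simp
    also have "\<dots> \<le> (443/100) / c"
      using Bbound[OF t0 True] c by (intro divide_right_mono) auto
    finally show ?thesis .
  qed
  have main: "\<bar>(dx * u + dy * v) * K\<bar> < 1"
  proof -
    have "\<bar>(dx * u + dy * v) * K\<bar> = \<bar>dx * u + dy * v\<bar> * \<bar>K\<bar>" by (simp add: abs_mult)
    also have "\<dots> \<le> D * (sqrt 2 * R) * \<bar>K\<bar>" by (rule mult_right_mono[OF lin]) simp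
    also have "\<dots> = D * sqrt 2 * \<bar>R * K\<bar>" using R0 by (simp add: abs_mult)
    also have "\<dots> \<le> D * sqrt 2 * ((443/100) / c)"
      by (rule mult_left_mono[OF RK]) (simp add: D0)
    also have "\<dots> < 1"
      using assms(2) c by (simp add: D_def field_simps)
    finally show ?thesis .
  qed
  have "1 + dx * (u * K) + dy * (v * K) > 0"
  proof -
    have "dx * (u * K) + dy * (v * K) = (dx * u + dy * v) * K" by (simp add: algebra_simps)
    then show ?thesis using main by linarith
  qed
  then show ?thesis using dX dY by blast
qed

end
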